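(* Let $m\ge1$ and let $X_i^j$, $1\le i\le m$, $1\le j\le4$, be i.i.d. $\mathcal{N}(0,\Sigma)$ random vectors in $\mathbb{R}^d$. Let $Z_i=\frac14\langle X_i^1-X_i^3,X_i^2-X_i^4\rangle^2$. Then for all $q\in\mathbb{N}$, $$\mathbb{E}\Big[\Big(\frac1m\sum_{i=1}^mZ_i-\operatorname{Tr}\Sigma^2\Big)^{2q}\Big]\le\Big(4\sqrt2\,\phi\,q^2\frac{\operatorname{Tr}\Sigma^2}{\sqrt m}\Big)^{2q},$$ where $\phi=(1+\sqrt5)/2$.
   Context: $\operatorname{Tr}$ denotes the trace; $\mathbb{N}=\{0,1,2,\dots\}$ with $0^0=1$. *)

theory Defs
  imports "HOL-Probability.Probability"
begin

definition centered_gaussian_vector ::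
  "'a measure \<Rightarrow> ('a \<Rightarrow> real^'d) \<Rightarrow> real^'d^'d \<Rightarrow> bool" where
  "centered_gaussian_vector M X S \<longleftrightarrow>
     X \<in> borel_measurable M \<and>
     (\<forall>v::real^'d. let s = v \<bullet> (S *v v) in
        distr M borel (\<lambda>\<omega>. v \<bullet> X \<omega>) =
          (if s = 0 then return borel 0
           else density lborel (normal_density 0 (sqrt s))))"

end

theory Submission
  imports Defs
begin
definition mom :: "nat \<Rightarrow> real" where
  "mom k = fact (2*k) / (2^k * fact k)"

lemma mom_0[simp]: "mom 0 = 1" by (simp add: mom_def)

lemma mom_Suc: "mom (Suc k) = (2 * real k + 1) * mom k"
proof -
  have f: "fact (2 * Suc k) = (2 * real k + 2) * ((2 * real k + 1) * (fact (2*k) :: real))"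
    by (simp add: algebra_simps)
  have g: "(2::real) ^ Suc k * fact (Suc k) = 2 * (real k + 1) * (2 ^ k * fact k)"
    by (simp add: algebra_simps)
  have "mom (Suc k) = ((2 * real k + 2) * ((2 * real k + 1) * fact (2*k))) / (2 * (real k + 1) * (2 ^ k * fact k))"
    unfolding mom_def f g by simp
  also have "\<dots> = (2 * (real k + 1) * ((2 * real k + 1) * fact (2*k))) / (2 * (real k + 1) * (2 ^ k * fact k))"
    by (simp add: algebra_simps)
  also have "\<dots> = ((2 * real k + 1) * fact (2*k)) / (2 ^ k * fact k)"
    by (rule mult_divide_mult_cancel_left) simp
  also have "\<dots> = (2 * real k + 1) * (fact (2*k) / (2 ^ k * fact k))"
    by simp
  finally show ?thesis by (simp add: mom_def)
qed

lemma mom_1[simp]: "mom 1 = 1" using mom_Suc[of 0] by simp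

lemma mom_Suc0[simp]: "mom (Suc 0) = 1" using mom_Suc[of 0] by simp

lemma mom_pos: "0 < mom k" by (simp add: mom_def)

lemma mom_le: "mom k \<le> real k ^ k"
proof (induction k)
  case 0 then show ?case by simp
next
  case (Suc k)
  show ?case
  proof (cases "k = 0")
    case True then show ?thesis by (simp add: mom_Suc)
  next
    case False
    then have kp: "real k > 0" by simp
    have b: "1 + real k * (1 / real k) \<le> (1 + 1 / real k) ^ k"
      by (rule Bernoulli_inequality) (use kp in \<open>simp add: order_trans[OF _ less_imp_le[OF divide_pos_pos]]\<close>)
    then have "2 \<le> (1 + 1 / real k) ^ k" using kp by simp
    then have "2 * real k ^ k \<le> (1 + 1 / real k) ^ k * real k ^ k"
      by (simp add: mult_right_mono)
    also have "\<dots> = (real k + 1) ^ k"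
      using kp by (simp add: power_mult_distrib[symmetric] field_simps)
    finally have c: "2 * real k ^ k \<le> (real k + 1) ^ k" .
    have "mom (Suc k) \<le> (2 * real k + 1) * real k ^ k"
      using Suc.IH by (simp add: mom_Suc mult_left_mono)
    also have "\<dots> \<le> (real k + 1) * (2 * real k ^ k)"
      by (simp add: algebra_simps)
    also have "\<dots> \<le> (real k + 1) * (real k + 1) ^ k"
      using c by (simp add: mult_left_mono)
    finally show ?thesis by (simp add: add.commute)
  qed
qed

lemma binom_term_le:
  assumes "k \<le> n"
  shows "real (n choose k) * real k ^ k * real (n - k) ^ (n - k) \<le> real n ^ n"
proof -
  have "real n ^ n = (real k + real (n - k)) ^ n" using assms by simp
  also have "\<dots> = (\<Sum>i\<le>n. real (n choose i) * real k ^ i * real (n - k) ^ (n - i))"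
    by (rule binomial_ring)
  finally have e: "real n ^ n = \<dots>" .
  have "real (n choose k) * real k ^ k * real (n - k) ^ (n - k)
      \<le> (\<Sum>i\<le>n. real (n choose i) * real k ^ i * real (n - k) ^ (n - i))"
    by (rule member_le_sum[where f = "\<lambda>i. real (n choose i) * real k ^ i * real (n - k) ^ (n - i)"])
       (use assms in auto)
  then show ?thesis using e by simp
qed

lemma geom_half: "1 \<le> n \<Longrightarrow> (\<Sum>k=2..n. (1/2::real) ^ k) \<le> 1/2 - (1/2) ^ n"
proof (induction n rule: dec_induct)
  case base then show ?case by simp
next
  case (step n)
  have "(\<Sum>k=2..Suc n. (1/2::real) ^ k) = (\<Sum>k=2..n. (1/2::real) ^ k) + (1/2)^(Suc n)"
    using step by (simp add: sum.atLeast_Suc_atMost_Suc_shift)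
  then show ?case using step by simp
qed

lemma num_rec:
  fixes T :: real
  assumes T: "0 \<le> T" and n: "2 \<le> n"
  shows "(\<Sum>k=2..n. real (n choose k) * (2 * real (n-k) ^ 2 * T) ^ (n - k) * (2 * real k ^ (2*k) * T ^ k))
     \<le> real n / 2 * (2 * real n ^ 2 * T) ^ n"
proof -
  have trm: "real (n choose k) * (2 * real (n-k) ^ 2 * T) ^ (n - k) * (2 * real k ^ (2*k) * T ^ k)
      \<le> 2 ^ (n + 1) * (1/2) ^ k * (real n ^ n * real n ^ n * T ^ n)" if k: "k \<in> {2..n}" for k
  proof -
    have kn: "k \<le> n" using k by simp
    have a: "real (n choose k) * real k ^ k * real (n - k) ^ (n - k) \<le> real n ^ n"
      by (rule binom_term_le[OF kn])
    have b: "real k ^ k * real (n - k) ^ (n - k) \<le> real n ^ n"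
    proof -
      have "real k ^ k * real (n - k) ^ (n - k) \<le> real n ^ k * real n ^ (n - k)"
        by (intro mult_mono power_mono) (use kn in auto)
      also have "\<dots> = real n ^ n" using kn by (simp add: power_add[symmetric])
      finally show ?thesis .
    qed
    have p1: "real k ^ (2*k) = real k ^ k * real k ^ k" by (simp add: mult_2 power_add)
    have p2: "(real (n-k) ^ 2) ^ (n-k) = real (n-k) ^ (n-k) * real (n-k) ^ (n-k)"
      by (simp add: power_mult[symmetric] mult_2 power_add)
    have "real (n choose k) * (2 * real (n-k) ^ 2 * T) ^ (n - k) * (2 * real k ^ (2*k) * T ^ k)
       = 2 ^ (n - k + 1) * (real (n choose k) * real k ^ k * real (n - k) ^ (n - k)) *
           (real k ^ k * real (n - k) ^ (n - k)) * (T ^ (n - k) * T ^ k)"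
      unfolding p1 power_mult_distrib p2 by (simp add: algebra_simps power_add)
    also have "T ^ (n - k) * T ^ k = T ^ n" using kn by (simp add: power_add[symmetric])
    also have "2 ^ (n - k + 1) = (2::real) ^ (n + 1) * (1/2) ^ k"
    proof -
      have "(2::real) ^ (n + 1) = 2 ^ (n - k + 1) * 2 ^ k" using kn by (simp add: power_add[symmetric])
      then show ?thesis by (simp add: power_one_over)
    qed
    also have "2 ^ (n + 1) * (1 / 2) ^ k * (real (n choose k) * real k ^ k * real (n - k) ^ (n - k)) *
        (real k ^ k * real (n - k) ^ (n - k)) * T ^ n \<le> 2 ^ (n + 1) * (1/2) ^ k * real n ^ n * real n ^ n * T ^ n"
      by (intro mult_mono a b mult_nonneg_nonneg) (use T in auto)
    finally show ?thesis by (simp add: algebra_simps)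
  qed
  have "(\<Sum>k=2..n. real (n choose k) * (2 * real (n-k) ^ 2 * T) ^ (n - k) * (2 * real k ^ (2*k) * T ^ k))
      \<le> (\<Sum>k=2..n. 2 ^ (n + 1) * (1/2) ^ k * (real n ^ n * real n ^ n * T ^ n))"
    by (rule sum_mono) (rule trm)
  also have "\<dots> = 2 ^ (n + 1) * (real n ^ n * real n ^ n * T ^ n) * (\<Sum>k=2..n. (1/2) ^ k)"
    by (simp add: sum_distrib_left sum_distrib_right algebra_simps)
  also have "\<dots> \<le> 2 ^ (n + 1) * (real n ^ n * real n ^ n * T ^ n) * (1/2)"
  proof (rule mult_left_mono)
    have "(0::real) \<le> (1/2)^n" by simp
    then show "(\<Sum>k=2..n. (1/2::real) ^ k) \<le> 1/2" using geom_half[of n] n by linarith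
  qed (use T in simp)
  also have "\<dots> = (2 * real n ^ 2 * T) ^ n"
  proof -
    have "(real n ^ 2) ^ n = real n ^ n * real n ^ n"
      by (simp add: power_mult[symmetric] mult_2 power_add)
    then have "(2 * real n ^ 2 * T) ^ n = 2 ^ n * (real n ^ n * real n ^ n * T ^ n)"
      by (simp add: power_mult_distrib)
    then show ?thesis by simp
  qed
  also have "\<dots> \<le> real n / 2 * (2 * real n ^ 2 * T) ^ n"
  proof -
    have "0 \<le> (2 * real n ^ 2 * T) ^ n" using T by simp
    moreover have "1 \<le> real n / 2" using n by simp
    ultimately show ?thesis using mult_right_mono[of 1 "real n / 2" "(2 * real n ^ 2 * T) ^ n"] by simp
  qed
  finally show ?thesis .
qed

lemma sqrt_bern:
  fixes s t :: real
  assumes s: "0 \<le> s" and t: "t = sqrt (s^2 + 1)"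
  shows "s ^ (n+2) + real (n+2) / 2 * s ^ n \<le> t ^ (n + 2)"
proof (induction n rule: less_induct)
  case (less n)
  have t0: "0 \<le> t" and t2: "t^2 = s^2 + 1" using t by auto
  show ?case
  proof (cases "n \<le> 1")
    case True
    then consider "n = 0" | "n = 1" by linarith
    then show ?thesis
    proof cases
      case 1 then show ?thesis using t2 by (simp add: power2_eq_square)
    next
      case 2
      have "(s ^ 3 + 3/2 * s) ^ 2 \<le> (t ^ 3) ^ 2"
      proof -
        have "(t ^ 3) ^ 2 = (t^2)^3" by (simp add: power_mult[symmetric] mult.commute)
        moreover have "(s ^ 3 + 3/2 * s) ^ 2 = s ^ 6 + 3 * s ^ 4 + 9 / 4 * s ^ 2"
          by (simp add: power2_eq_square eval_nat_numeral algebra_simps)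
        moreover have "(s^2 + 1) ^ 3 = s ^ 6 + 3 * s ^ 4 + 3 * s ^ 2 + 1"
          by (simp add: power2_eq_square eval_nat_numeral algebra_simps)
        moreover have "0 \<le> s^2" by simp
        ultimately show ?thesis using t2 by simp
      qed
      then have "s ^ 3 + 3/2 * s \<le> t ^ 3"
        by (rule power2_le_imp_le) (use t0 in simp)
      then show ?thesis using 2 by (simp add: numeral_3_eq_3)
    qed
  next
    case False
    then obtain j where j: "n = j + 2" by (metis add.commute le_Suc_ex not_le Suc_1 Suc_leI)
    have IH: "s ^ (j+2) + real (j+2) / 2 * s ^ j \<le> t ^ (j + 2)" using less j by simp
    have "t ^ (n + 2) = t ^ ((j + 2) + 2)" using j by simp
    also have "\<dots> = t ^ (j + 2) * t^2" by (rule power_add)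
    also have "\<dots> \<ge> (s ^ (j+2) + real (j+2) / 2 * s ^ j) * (s^2 + 1)"
      unfolding t2 by (rule mult_right_mono[OF IH]) simp
    finally have "(s ^ (j+2) + real (j+2) / 2 * s ^ j) * (s^2 + 1) \<le> t ^ (n+2)" .
    moreover have "s ^ (n+2) + real (n+2) / 2 * s ^ n \<le> (s ^ (j+2) + real (j+2) / 2 * s ^ j) * (s^2 + 1)"
    proof -
      have "0 \<le> real (j+2) / 2 * s ^ j" using s by simp
      then show ?thesis using j by (simp add: algebra_simps power_add power2_eq_square)
    qed
    ultimately show ?thesis by linarith
  qed
qed

definition QF :: "('d::finite \<Rightarrow> 'd \<Rightarrow> real) \<Rightarrow> ('d \<Rightarrow> real) \<Rightarrow> ('d \<Rightarrow> real) \<Rightarrow> real" where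
  "QF K x y = (\<Sum>a\<in>UNIV. \<Sum>b\<in>UNIV. x a * K a b * y b)"

lemma QF_expand:
  "QF K (\<lambda>a. x a + t * y a) (\<lambda>a. x a + t * y a) = QF K x x + t * QF K x y + t * QF K y x + t^2 * QF K y y"
  unfolding QF_def by (simp add: algebra_simps sum.distrib sum_distrib_left power2_eq_square)

lemma QF_sym:
  assumes "\<And>a b. K a b = K b a"
  shows "QF K y x = QF K x y"
  unfolding QF_def by (subst sum.swap) (simp add: assms mult.commute mult.left_commute)

lemma QF_zero:
  assumes sym: "\<And>a b. K a b = K b a" and psd: "\<And>x. 0 \<le> QF K x x" and y: "QF K y y = 0"
  shows "QF K x y = 0"
proof (rule ccontr)
  assume nz: "QF K x y \<noteq> 0"
  define t where "t = - (QF K x x + 1) / (2 * QF K x y)"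
  have "0 \<le> QF K (\<lambda>a. x a + t * y a) (\<lambda>a. x a + t * y a)" by (rule psd)
  also have "\<dots> = QF K x x + 2 * t * QF K x y"
    using QF_sym[OF sym, where x=x and y=y] unfolding QF_expand y by simp
  also have "\<dots> = -1" using nz by (simp add: t_def field_simps)
  finally show False by simp
qed

lemma QF_cs:
  assumes sym: "\<And>a b. K a b = K b a" and psd: "\<And>x. 0 \<le> QF K x x" and y: "0 < QF K y y"
  shows "(QF K x y)^2 \<le> QF K x x * QF K y y"
proof -
  define t where "t = - QF K x y / QF K y y"
  have "0 \<le> QF K (\<lambda>a. x a + t * y a) (\<lambda>a. x a + t * y a)" by (rule psd)
  also have "\<dots> = QF K x x + 2 * t * QF K x y + t^2 * QF K y y"
    using QF_sym[OF sym, where x=x and y=y] unfolding QF_expand by simp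
  also have "\<dots> = QF K x x - (QF K x y)^2 / QF K y y"
    using y by (simp add: t_def field_simps power2_eq_square)
  finally have "(QF K x y)^2 / QF K y y \<le> QF K x x" by simp
  then show ?thesis using y by (simp add: divide_le_eq)
qed

lemma delta_r: "(\<Sum>b\<in>(UNIV::'d::finite set). f b * (if b = j then 1 else (0::real))) = f j"
proof -
  have "(\<Sum>b\<in>(UNIV::'d set). f b * (if b = j then 1 else (0::real))) = (\<Sum>b\<in>UNIV. if b = j then f b else 0)"
    by (rule sum.cong) auto
  then show ?thesis by simp
qed

lemma delta_l: "(\<Sum>b\<in>(UNIV::'d::finite set). (if b = j then 1 else (0::real)) * f b) = f j"
  using delta_r[of f j] by (simp add: mult.commute)

lemma QF_delta: "QF K x (\<lambda>a. if a = i then 1 else 0) = (\<Sum>a\<in>UNIV. x a * K a i)"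
  unfolding QF_def delta_r by simp

lemma QF_delta2: "QF K (\<lambda>a. if a = i then 1 else 0) (\<lambda>a. if a = j then 1 else 0) = K i j"
  unfolding QF_def delta_r by (simp add: delta_l[where f="\<lambda>a. K a j"])

lemma psd_factor_aux:
  fixes K :: "'d::finite \<Rightarrow> 'd \<Rightarrow> real"
  shows "card {a. K a a \<noteq> 0} \<le> n \<Longrightarrow> (\<And>a b. K a b = K b a) \<Longrightarrow> (\<And>x. 0 \<le> QF K x x) \<Longrightarrow>
    \<exists>(N::nat) w. \<forall>a b. K a b = (\<Sum>j<N. w j a * w j b)"
proof (induction n arbitrary: K)
  case 0
  have diag: "K a a = 0" for a using 0(1) by auto
  have Kz: "K a b = 0" for a b
  proof -
    have "QF K (\<lambda>c. if c = b then 1 else 0) (\<lambda>c. if c = b then 1 else 0) = 0"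
      using diag by (simp add: QF_delta2)
    then have "QF K (\<lambda>c. if c = a then 1 else 0) (\<lambda>c. if c = b then 1 else 0) = 0"
      by (rule QF_zero[OF 0(2) 0(3)])
    then show ?thesis by (simp add: QF_delta2)
  qed
  have "\<forall>a b. K a b = (\<Sum>j<(0::nat). (f::nat\<Rightarrow>'d\<Rightarrow>real) j a * f j b)" for f by (simp add: Kz)
  then show ?case by blast
next
  case (Suc n K)
  note sym = Suc.prems(2) and psd = Suc.prems(3)
  let ?e = "\<lambda>i. (\<lambda>c. if c = i then 1 else (0::real))"
  have diag_nn: "0 \<le> K a a" for a using psd[of "?e a"] by (simp add: QF_delta2)
  have zero_row: "K a b = 0" if "K b b = 0" for a b
  proof -
    have "QF K (?e b) (?e b) = 0" using that by (simp add: QF_delta2)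
    then have "QF K (?e a) (?e b) = 0" by (rule QF_zero[OF sym psd])
    then show ?thesis by (simp add: QF_delta2)
  qed
  show ?case
  proof (cases "\<exists>i. K i i \<noteq> 0")
    case False
    then have "card {a. K a a \<noteq> 0} \<le> n" by simp
    then show ?thesis using Suc.IH[of K] sym psd by blast
  next
    case True
    then obtain i where i: "K i i \<noteq> 0" by blast
    then have ipos: "0 < K i i" using diag_nn[of i] by simp
    define u where "u a = K a i / sqrt (K i i)" for a
    define K' where "K' a b = K a b - u a * u b" for a b
    have uu: "u a * u b = K a i * K i b / K i i" for a b
      using ipos sym[of i b] by (simp add: u_def field_simps)
    have sym': "K' a b = K' b a" for a b unfolding K'_def using sym[of a b] by (simp add: mult.commute)
    have QK': "QF K' x x = QF K x x - (\<Sum>a\<in>UNIV. x a * u a)^2" for x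
      unfolding K'_def QF_def by (simp add: algebra_simps sum_subtractf sum_distrib_left sum_distrib_right power2_eq_square)
    have psd': "0 \<le> QF K' x x" for x
    proof -
      have "(\<Sum>a\<in>UNIV. x a * u a) = QF K x (?e i) / sqrt (K i i)"
        unfolding QF_delta u_def by (simp add: sum_divide_distrib)
      then have "(\<Sum>a\<in>UNIV. x a * u a)^2 = (QF K x (?e i))^2 / K i i"
        using ipos by (simp add: power_divide)
      also have "\<dots> \<le> QF K x x"
        using QF_cs[OF sym psd, of "?e i" x] ipos by (simp add: QF_delta2 divide_le_eq)
      finally show ?thesis unfolding QK' by simp
    qed
    have sub: "{a. K' a a \<noteq> 0} \<subseteq> {a. K a a \<noteq> 0} - {i}"
    proof
      fix a assume "a \<in> {a. K' a a \<noteq> 0}"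
      then have a: "K' a a \<noteq> 0" by simp
      have "a \<noteq> i" using a ipos sym by (auto simp: K'_def uu)
      moreover have "K a a \<noteq> 0" using a zero_row[of a i] by (auto simp: K'_def uu)
      ultimately show "a \<in> {a. K a a \<noteq> 0} - {i}" by simp
    qed
    have "card {a. K' a a \<noteq> 0} \<le> card ({a. K a a \<noteq> 0} - {i})"
      by (rule card_mono[OF _ sub]) simp
    also have "\<dots> = card {a. K a a \<noteq> 0} - 1" using i by (simp add: card_Diff_singleton)
    also have "\<dots> \<le> n" using Suc.prems(1) by simp
    finally obtain N :: nat and w where w: "\<forall>a b. K' a b = (\<Sum>j<N. w j a * w j b)"
      using Suc.IH[of K'] sym' psd' by blast
    define w' where "w' = w(N := u)"
    have "K a b = (\<Sum>j<Suc N. w' j a * w' j b)" for a b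
    proof -
      have "(\<Sum>j<N. w' j a * w' j b) = (\<Sum>j<N. w j a * w j b)"
        by (rule sum.cong) (auto simp: w'_def)
      moreover have "K a b - u a * u b = (\<Sum>j<N. w j a * w j b)" using w by (simp add: K'_def)
      ultimately show ?thesis by (simp add: w'_def)
    qed
    then show ?thesis by blast
  qed
qed

lemma psd_factor_mat:
  fixes S :: "real^'d^'d"
  assumes sym: "transpose S = S" and psd: "\<forall>v. 0 \<le> v \<bullet> (S *v v)"
  shows "\<exists>(N::nat) (w::nat \<Rightarrow> real^'d). (\<forall>u v. u \<bullet> (S *v v) = (\<Sum>j<N. (u \<bullet> w j) * (v \<bullet> w j)))
           \<and> trace (S ** S) = (\<Sum>j<N. w j \<bullet> (S *v w j))"
proof -
  define K where "K a b = S $ a $ b" for a b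
  have symK: "K a b = K b a" for a b
  proof -
    have "transpose S $ a $ b = S $ a $ b" using sym by simp
    then show ?thesis by (simp add: K_def transpose_def)
  qed
  have Q: "v \<bullet> (S *v u) = QF K (\<lambda>a. v $ a) (\<lambda>a. u $ a)" for v u
    by (simp add: QF_def K_def inner_vec_def matrix_vector_mult_def sum_distrib_left algebra_simps)
  have psdK: "0 \<le> QF K x x" for x
  proof -
    have e: "vec_nth (vec_lambda x) = x" by (rule ext) simp
    show ?thesis using psd[rule_format, of "\<chi> a. x a"] unfolding Q e by simp
  qed
  obtain N :: nat and w0 where w0: "\<forall>a b. K a b = (\<Sum>j<N. w0 j a * w0 j b)"
    using psd_factor_aux[OF order_refl symK psdK] by blast
  define w where "w j = (\<chi> a. w0 j a)" for j
  have 1: "u \<bullet> (S *v v) = (\<Sum>j<N. (u \<bullet> w j) * (v \<bullet> w j))" for u v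
  proof -
    have "u \<bullet> (S *v v) = (\<Sum>a\<in>UNIV. \<Sum>b\<in>UNIV. u $ a * (\<Sum>j<N. w0 j a * w0 j b) * v $ b)"
      unfolding Q QF_def using w0 by simp
    also have "\<dots> = (\<Sum>a\<in>UNIV. \<Sum>b\<in>UNIV. \<Sum>j<N. u $ a * w0 j a * (v $ b * w0 j b))"
      by (simp add: sum_distrib_left sum_distrib_right algebra_simps)
    also have "\<dots> = (\<Sum>a\<in>UNIV. \<Sum>j<N. \<Sum>b\<in>UNIV. u $ a * w0 j a * (v $ b * w0 j b))"
      by (simp add: sum.swap[where A=UNIV and B="{..<N}"])
    also have "\<dots> = (\<Sum>j<N. \<Sum>a\<in>UNIV. \<Sum>b\<in>UNIV. u $ a * w0 j a * (v $ b * w0 j b))"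
      by (rule sum.swap)
    also have "\<dots> = (\<Sum>j<N. (u \<bullet> w j) * (v \<bullet> w j))"
      by (simp add: w_def inner_vec_def sum_distrib_left sum_distrib_right) (rule sum.cong[OF refl], rule sum.swap)
    finally show ?thesis .
  qed
  have 2: "trace (S ** S) = (\<Sum>j<N. w j \<bullet> (S *v w j))"
  proof -
    have "trace (S ** S) = (\<Sum>a\<in>UNIV. \<Sum>b\<in>UNIV. K a b * K a b)"
      by (simp add: trace_def matrix_matrix_mult_def K_def[symmetric] symK[of _ a for a])
    also have "\<dots> = (\<Sum>a\<in>UNIV. \<Sum>b\<in>UNIV. \<Sum>j<N. w0 j a * K a b * w0 j b)"
      using w0 by (simp add: sum_distrib_left sum_distrib_right algebra_simps)
    also have "\<dots> = (\<Sum>a\<in>UNIV. \<Sum>j<N. \<Sum>b\<in>UNIV. w0 j a * K a b * w0 j b)"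
      by (simp add: sum.swap[where A=UNIV and B="{..<N}"])
    also have "\<dots> = (\<Sum>j<N. \<Sum>a\<in>UNIV. \<Sum>b\<in>UNIV. w0 j a * K a b * w0 j b)"
      by (rule sum.swap)
    also have "\<dots> = (\<Sum>j<N. w j \<bullet> (S *v w j))"
      unfolding Q QF_def by (simp add: w_def)
    finally show ?thesis .
  qed
  show ?thesis using 1 2 by blast
qed

lemma (in prob_space) gauss_rv:
  assumes "centered_gaussian_vector M X S"
  shows "X \<in> borel_measurable M"
  using assms unfolding centered_gaussian_vector_def by simp

lemma (in prob_space) gauss_proj_distr:
  assumes g: "centered_gaussian_vector M X S" and s: "0 < v \<bullet> (S *v v)"
  shows "distributed M lborel (\<lambda>\<omega>. v \<bullet> X \<omega>) (\<lambda>x. ennreal (normal_density 0 (sqrt (v \<bullet> (S *v v))) x))"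
proof -
  have X[measurable]: "X \<in> borel_measurable M" using g by (rule gauss_rv)
  have d: "distr M borel (\<lambda>\<omega>. v \<bullet> X \<omega>) = density lborel (normal_density 0 (sqrt (v \<bullet> (S *v v))))"
    using g s unfolding centered_gaussian_vector_def Let_def by auto
  have "distr M lborel (\<lambda>\<omega>. v \<bullet> X \<omega>) = distr M borel (\<lambda>\<omega>. v \<bullet> X \<omega>)"
    by (rule distr_cong) auto
  then show ?thesis unfolding distributed_def using d by simp
qed

lemma (in prob_space) gauss_proj_zero:
  assumes g: "centered_gaussian_vector M X S" and s: "v \<bullet> (S *v v) = 0"
  shows "AE \<omega> in M. v \<bullet> X \<omega> = 0"
proof -
  have X[measurable]: "X \<in> borel_measurable M" using g by (rule gauss_rv)
  have d: "distr M borel (\<lambda>\<omega>. v \<bullet> X \<omega>) = return borel 0"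
    using g s unfolding centered_gaussian_vector_def Let_def by auto
  have "AE x in distr M borel (\<lambda>\<omega>. v \<bullet> X \<omega>). x = 0" unfolding d by (subst AE_return) auto
  then show ?thesis by (subst (asm) AE_distr_iff) auto
qed

lemma (in prob_space) gauss_diff_moment:
  fixes X1 X2 :: "'a \<Rightarrow> real^'d"
  assumes ind: "indep_var borel X1 borel X2"
    and g1: "centered_gaussian_vector M X1 S" and g2: "centered_gaussian_vector M X2 S"
    and s0: "0 \<le> v \<bullet> (S *v v)"
  shows "(\<integral>\<^sup>+\<omega>. ennreal ((v \<bullet> (X1 \<omega> - X2 \<omega>)) ^ (2*k)) \<partial>M) = ennreal (mom k * (2 * (v \<bullet> (S *v v))) ^ k)"
proof -
  define s where "s = v \<bullet> (S *v v)"
  have X1[measurable]: "X1 \<in> borel_measurable M" using g1 by (rule gauss_rv)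
  have X2[measurable]: "X2 \<in> borel_measurable M" using g2 by (rule gauss_rv)
  have eq: "v \<bullet> (X1 \<omega> - X2 \<omega>) = v \<bullet> X1 \<omega> - v \<bullet> X2 \<omega>" for \<omega> by (simp add: inner_diff_right)
  show ?thesis
  proof (cases "s = 0")
    case True
    have "AE \<omega> in M. v \<bullet> X1 \<omega> = 0" using gauss_proj_zero[OF g1] True s_def by simp
    moreover have "AE \<omega> in M. v \<bullet> X2 \<omega> = 0" using gauss_proj_zero[OF g2] True s_def by simp
    ultimately have "AE \<omega> in M. ennreal ((v \<bullet> (X1 \<omega> - X2 \<omega>)) ^ (2*k)) = ennreal (0 ^ (2*k))"
      by eventually_elim (simp add: eq)
    then have "(\<integral>\<^sup>+\<omega>. ennreal ((v \<bullet> (X1 \<omega> - X2 \<omega>)) ^ (2*k)) \<partial>M) = (\<integral>\<^sup>+\<omega>. ennreal (0 ^ (2*k)) \<partial>M)"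
      by (rule nn_integral_cong_AE)
    then have "(\<integral>\<^sup>+\<omega>. ennreal ((v \<bullet> (X1 \<omega> - X2 \<omega>)) ^ (2*k)) \<partial>M) = ennreal (0 ^ (2*k))"
      by (simp add: emeasure_space_1)
    then show ?thesis using True s_def by (cases k) auto
  next
    case False
    then have sp: "0 < s" using s0 s_def by simp
    have ind': "indep_var borel (\<lambda>\<omega>. v \<bullet> X1 \<omega>) borel (\<lambda>\<omega>. v \<bullet> X2 \<omega>)"
      using indep_var_compose[OF ind, of "\<lambda>x. v \<bullet> x" borel "\<lambda>x. v \<bullet> x" borel] by (simp add: comp_def)
    have d1: "distributed M lborel (\<lambda>\<omega>. v \<bullet> X1 \<omega>) (normal_density 0 (sqrt s))"
      using gauss_proj_distr[OF g1] sp s_def by simp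
    have d2: "distributed M lborel (\<lambda>\<omega>. v \<bullet> X2 \<omega>) (normal_density 0 (sqrt s))"
      using gauss_proj_distr[OF g2] sp s_def by simp
    have dd: "distributed M lborel (\<lambda>\<omega>. v \<bullet> X1 \<omega> - v \<bullet> X2 \<omega>) (normal_density (0 - 0) (sqrt ((sqrt s)\<^sup>2 + (sqrt s)\<^sup>2)))"
      by (rule diff_indep_normal[OF ind']) (use sp d1 d2 in auto)
    define \<sigma> where "\<sigma> = sqrt (2 * s)"
    have sig: "0 < \<sigma>" using sp by (simp add: \<sigma>_def)
    have dd': "distributed M lborel (\<lambda>\<omega>. v \<bullet> X1 \<omega> - v \<bullet> X2 \<omega>) (normal_density 0 \<sigma>)"
      using dd sp by (simp add: \<sigma>_def)
    have "(\<integral>\<^sup>+\<omega>. ennreal ((v \<bullet> (X1 \<omega> - X2 \<omega>)) ^ (2*k)) \<partial>M)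
        = (\<integral>\<^sup>+x. ennreal (normal_density 0 \<sigma> x) * ennreal (x ^ (2*k)) \<partial>lborel)"
      unfolding eq by (rule distributed_nn_integral[OF dd', symmetric]) simp
    also have "\<dots> = (\<integral>\<^sup>+x. ennreal (normal_density 0 \<sigma> x * (x - 0) ^ (2*k)) \<partial>lborel)"
      by (rule nn_integral_cong) (simp add: ennreal_mult' [symmetric] zero_le_even_power)
    also have "\<dots> = ennreal (fact (2 * k) / ((2 / \<sigma>\<^sup>2)^k * fact k))"
    proof -
      note hb = normal_moment_even[OF sig, of 0 k]
      have "(\<integral>\<^sup>+x. ennreal (normal_density 0 \<sigma> x * (x - 0) ^ (2*k)) \<partial>lborel)
          = ennreal (\<integral>x. normal_density 0 \<sigma> x * (x - 0) ^ (2*k) \<partial>lborel)"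
        by (rule nn_integral_eq_integral) (use hb in \<open>auto simp: has_bochner_integral_iff zero_le_even_power\<close>)
      then show ?thesis using has_bochner_integral_integral_eq[OF hb] by simp
    qed
    also have "fact (2 * k) / ((2 / \<sigma>\<^sup>2)^k * fact k) = mom k * (2 * s) ^ k"
      using sp by (simp add: \<sigma>_def mom_def power_divide field_simps)
    finally show ?thesis by (simp add: s_def)
  qed
qed

lemma convex_pow_nonneg: "convex_on {0::real..} (\<lambda>x. x ^ k)"
proof (cases "even k")
  case True
  then show ?thesis using convex_on_subset[OF convex_power_even[OF True]] by auto
next
  case False
  then show ?thesis by (rule convex_power_odd)
qed

lemma jensen_pow:
  fixes p y :: "'i \<Rightarrow> real"
  assumes J: "finite J" "J \<noteq> {}" and p: "\<And>j. j \<in> J \<Longrightarrow> 0 < p j" and ps: "(\<Sum>j\<in>J. p j) = 1"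
    and y: "\<And>j. j \<in> J \<Longrightarrow> 0 \<le> y j"
  shows "(\<Sum>j\<in>J. y j) ^ k \<le> (\<Sum>j\<in>J. p j / p j ^ k * y j ^ k)"
proof -
  have "(\<Sum>j\<in>J. p j *\<^sub>R (y j / p j)) ^ k \<le> (\<Sum>j\<in>J. p j * (y j / p j) ^ k)"
    by (rule convex_on_sum[OF J convex_pow_nonneg ps, where y="\<lambda>j. y j / p j"])
       (use p y in \<open>auto intro: less_imp_le simp: divide_nonneg_pos\<close>)
  moreover have "(\<Sum>j\<in>J. p j *\<^sub>R (y j / p j)) = (\<Sum>j\<in>J. y j)"
    by (rule sum.cong) (use p in \<open>force simp: field_simps\<close>)+
  moreover have "(\<Sum>j\<in>J. p j * (y j / p j) ^ k) = (\<Sum>j\<in>J. p j / p j ^ k * y j ^ k)"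
    by (rule sum.cong) (use p in \<open>auto simp: field_simps power_divide\<close>)
  ultimately show ?thesis by simp
qed

context prob_space begin

lemma quad_moment:
  fixes X2 X4 :: "'a \<Rightarrow> real^'d" and w :: "nat \<Rightarrow> real^'d"
  assumes ind: "indep_var borel X2 borel X4"
    and g2: "centered_gaussian_vector M X2 S" and g4: "centered_gaussian_vector M X4 S"
    and psd: "\<forall>v. 0 \<le> v \<bullet> (S *v v)"
    and fac: "\<forall>u v. u \<bullet> (S *v v) = (\<Sum>j<N. (u \<bullet> w j) * (v \<bullet> w j))"
  shows "(\<integral>\<^sup>+\<omega>. ennreal (((X2 \<omega> - X4 \<omega>) \<bullet> (S *v (X2 \<omega> - X4 \<omega>))) ^ k) \<partial>M)
           \<le> ennreal (mom k * (2 * (\<Sum>j<N. w j \<bullet> (S *v w j)))^k)"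
    and "(\<integral>\<^sup>+\<omega>. ennreal ((X2 \<omega> - X4 \<omega>) \<bullet> (S *v (X2 \<omega> - X4 \<omega>))) \<partial>M)
           = ennreal (2 * (\<Sum>j<N. w j \<bullet> (S *v w j)))"
proof -
  have X2[measurable]: "X2 \<in> borel_measurable M" using g2 by (rule gauss_rv)
  have X4[measurable]: "X4 \<in> borel_measurable M" using g4 by (rule gauss_rv)
  define \<sigma> where "\<sigma> j = w j \<bullet> (S *v w j)" for j
  define T where "T = (\<Sum>j<N. \<sigma> j)"
  define \<xi> where "\<xi> j \<omega> = (w j \<bullet> (X2 \<omega> - X4 \<omega>))^2" for j \<omega>
  have q: "(X2 \<omega> - X4 \<omega>) \<bullet> (S *v (X2 \<omega> - X4 \<omega>)) = (\<Sum>j<N. \<xi> j \<omega>)" for \<omega>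
    using fac by (simp add: \<xi>_def power2_eq_square inner_commute)
  have \<xi>_nn: "0 \<le> \<xi> j \<omega>" for j \<omega> by (simp add: \<xi>_def)
  have \<xi>_mom: "(\<integral>\<^sup>+\<omega>. ennreal (\<xi> j \<omega> ^ k) \<partial>M) = ennreal (mom k * (2 * \<sigma> j) ^ k)" for j k
    unfolding \<xi>_def power_mult[symmetric] \<sigma>_def
    by (rule gauss_diff_moment[OF ind g2 g4]) (use psd in auto)
  have \<sigma>_ge: "(w j \<bullet> w j)^2 \<le> \<sigma> j" if "j < N" for j
  proof -
    have "\<sigma> j = (\<Sum>l<N. (w j \<bullet> w l)^2)" using fac by (simp add: \<sigma>_def power2_eq_square)
    moreover have "(w j \<bullet> w j)^2 \<le> (\<Sum>l<N. (w j \<bullet> w l)^2)"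
      by (rule member_le_sum[where f="\<lambda>l. (w j \<bullet> w l)^2"]) (use that in auto)
    ultimately show ?thesis by simp
  qed
  have \<sigma>_nn: "0 \<le> \<sigma> j" for j using psd by (simp add: \<sigma>_def)
  show "(\<integral>\<^sup>+\<omega>. ennreal ((X2 \<omega> - X4 \<omega>) \<bullet> (S *v (X2 \<omega> - X4 \<omega>))) \<partial>M) = ennreal (2 * (\<Sum>j<N. w j \<bullet> (S *v w j)))"
  proof -
    have "(\<integral>\<^sup>+\<omega>. ennreal ((X2 \<omega> - X4 \<omega>) \<bullet> (S *v (X2 \<omega> - X4 \<omega>))) \<partial>M)
        = (\<integral>\<^sup>+\<omega>. (\<Sum>j<N. ennreal (\<xi> j \<omega> ^ 1)) \<partial>M)"
      unfolding q by (simp add: \<xi>_nn sum_nonneg)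
    also have "\<dots> = (\<Sum>j<N. \<integral>\<^sup>+\<omega>. ennreal (\<xi> j \<omega> ^ 1) \<partial>M)"
      by (rule nn_integral_sum) (simp add: \<xi>_def)
    also have "\<dots> = (\<Sum>j<N. ennreal (2 * \<sigma> j))"
      unfolding \<xi>_mom by simp
    also have "\<dots> = ennreal (2 * T)" using \<sigma>_nn by (simp add: T_def sum_distrib_left)
    finally show ?thesis by (simp add: T_def \<sigma>_def)
  qed
  define J where "J = {j \<in> {..<N}. w j \<noteq> 0}"
  have \<sigma>_pos: "0 < \<sigma> j" if "j \<in> J" for j
  proof -
    have "0 < (w j \<bullet> w j)^2" using that by (simp add: J_def)
    moreover have "(w j \<bullet> w j)^2 \<le> \<sigma> j" using \<sigma>_ge[of j] that by (simp add: J_def)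
    ultimately show ?thesis by linarith
  qed
  have out: "\<xi> j \<omega> = 0" "\<sigma> j = 0" if "j < N" "j \<notin> J" for j \<omega>
    using that by (auto simp: J_def \<xi>_def \<sigma>_def)
  have qJ: "(\<Sum>j<N. \<xi> j \<omega>) = (\<Sum>j\<in>J. \<xi> j \<omega>)" for \<omega>
    by (rule sum.mono_neutral_right) (auto simp: J_def \<xi>_def)
  have TJ: "T = (\<Sum>j\<in>J. \<sigma> j)"
    unfolding T_def by (rule sum.mono_neutral_right) (auto simp: J_def \<sigma>_def)
  have finJ: "finite J" by (simp add: J_def)
  show "(\<integral>\<^sup>+\<omega>. ennreal (((X2 \<omega> - X4 \<omega>) \<bullet> (S *v (X2 \<omega> - X4 \<omega>))) ^ k) \<partial>M)
           \<le> ennreal (mom k * (2 * (\<Sum>j<N. w j \<bullet> (S *v w j)))^k)"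
  proof (cases "J = {}")
    case True
    then have "(X2 \<omega> - X4 \<omega>) \<bullet> (S *v (X2 \<omega> - X4 \<omega>)) = 0" for \<omega> unfolding q qJ by simp
    moreover have "T = 0" using True TJ by simp
    ultimately show ?thesis using mom_pos[of k]
      by (cases k) (simp_all add: emeasure_space_1 T_def \<sigma>_def)
  next
    case False
    have Tpos: "0 < T" unfolding TJ using False finJ \<sigma>_pos by (intro sum_pos) auto
    define p where "p j = \<sigma> j / T" for j
    have p_pos: "0 < p j" if "j \<in> J" for j using \<sigma>_pos[OF that] Tpos by (simp add: p_def)
    have p_sum: "(\<Sum>j\<in>J. p j) = 1" using Tpos by (simp add: p_def TJ[symmetric] sum_divide_distrib[symmetric])
    have "(\<integral>\<^sup>+\<omega>. ennreal (((X2 \<omega> - X4 \<omega>) \<bullet> (S *v (X2 \<omega> - X4 \<omega>))) ^ k) \<partial>M)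
        \<le> (\<integral>\<^sup>+\<omega>. (\<Sum>j\<in>J. ennreal (p j / p j ^ k) * ennreal (\<xi> j \<omega> ^ k)) \<partial>M)"
    proof (rule nn_integral_mono)
      fix \<omega>
      have "((X2 \<omega> - X4 \<omega>) \<bullet> (S *v (X2 \<omega> - X4 \<omega>))) ^ k \<le> (\<Sum>j\<in>J. p j / p j ^ k * \<xi> j \<omega> ^ k)"
        unfolding q qJ by (rule jensen_pow[OF finJ False p_pos p_sum \<xi>_nn])
      moreover have "(\<Sum>j\<in>J. ennreal (p j / p j ^ k) * ennreal (\<xi> j \<omega> ^ k)) = ennreal (\<Sum>j\<in>J. p j / p j ^ k * \<xi> j \<omega> ^ k)"
        using p_pos \<xi>_nn by (simp add: ennreal_mult[symmetric] sum_nonneg less_imp_le)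
      ultimately show "ennreal (((X2 \<omega> - X4 \<omega>) \<bullet> (S *v (X2 \<omega> - X4 \<omega>))) ^ k) \<le> (\<Sum>j\<in>J. ennreal (p j / p j ^ k) * ennreal (\<xi> j \<omega> ^ k))"
        by (simp add: ennreal_leI)
    qed
    also have "\<dots> = (\<Sum>j\<in>J. \<integral>\<^sup>+\<omega>. ennreal (p j / p j ^ k) * ennreal (\<xi> j \<omega> ^ k) \<partial>M)"
      by (rule nn_integral_sum) (simp add: \<xi>_def)
    also have "\<dots> = (\<Sum>j\<in>J. ennreal (p j / p j ^ k) * ennreal (mom k * (2 * \<sigma> j) ^ k))"
      by (subst nn_integral_cmult) (simp_all add: \<xi>_def[symmetric] \<xi>_mom, simp add: \<xi>_def)
    also have "\<dots> = (\<Sum>j\<in>J. ennreal (mom k * 2 ^ k * T ^ k * p j))"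
    proof (rule sum.cong[OF refl])
      fix j assume j: "j \<in> J"
      have "\<sigma> j = p j * T" using Tpos by (simp add: p_def)
      then have "p j / p j ^ k * (mom k * (2 * \<sigma> j) ^ k) = mom k * 2 ^ k * T ^ k * p j"
        using p_pos[OF j] by (simp add: power_mult_distrib field_simps)
      then show "ennreal (p j / p j ^ k) * ennreal (mom k * (2 * \<sigma> j) ^ k) = ennreal (mom k * 2 ^ k * T ^ k * p j)"
        using p_pos[OF j] mom_pos[of k] \<sigma>_nn[of j] by (simp add: ennreal_mult[symmetric])
    qed
    also have "\<dots> = ennreal (mom k * 2 ^ k * T ^ k * (\<Sum>j\<in>J. p j))"
      using p_pos mom_pos[of k] Tpos by (simp add: sum_distrib_left less_imp_le)
    also have "\<dots> = ennreal (mom k * (2 * T) ^ k)" by (simp add: p_sum power_mult_distrib mult.assoc)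
    finally show ?thesis by (simp add: T_def \<sigma>_def)
  qed
qed

end

context prob_space begin

lemma AB_moment:
  fixes X1 X2 X3 X4 :: "'a \<Rightarrow> real^'d"
  assumes i13: "indep_var borel X1 borel X3"
    and iAB: "indep_var borel (\<lambda>\<omega>. X1 \<omega> - X3 \<omega>) borel (\<lambda>\<omega>. X2 \<omega> - X4 \<omega>)"
    and g1: "centered_gaussian_vector M X1 S" and g3: "centered_gaussian_vector M X3 S"
    and psd: "\<forall>v. 0 \<le> v \<bullet> (S *v v)"
    and fac: "\<forall>u v. u \<bullet> (S *v v) = (\<Sum>j<N. (u \<bullet> w j) * (v \<bullet> w j))"
  shows "(\<integral>\<^sup>+\<omega>. ennreal (((X1 \<omega> - X3 \<omega>) \<bullet> (X2 \<omega> - X4 \<omega>)) ^ (2*k)) \<partial>M)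
     = ennreal (mom k * 2 ^ k) * (\<integral>\<^sup>+\<omega>. ennreal (((X2 \<omega> - X4 \<omega>) \<bullet> (S *v (X2 \<omega> - X4 \<omega>))) ^ k) \<partial>M)"
proof -
  define A where "A \<omega> = X1 \<omega> - X3 \<omega>" for \<omega>
  define B where "B \<omega> = X2 \<omega> - X4 \<omega>" for \<omega>
  have rvA[measurable]: "A \<in> borel_measurable M" using indep_var_rv1[OF iAB] unfolding A_def[abs_def] .
  have rvB[measurable]: "B \<in> borel_measurable M" using indep_var_rv2[OF iAB] unfolding B_def[abs_def] .
  have iAB': "indep_var borel A borel B" using iAB by (simp add: A_def[abs_def] B_def[abs_def])
  let ?PA = "distr M borel A" and ?PB = "distr M borel B"
  interpret PA: prob_space ?PA by (rule prob_space_distr) simp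
  interpret PB: prob_space ?PB by (rule prob_space_distr) simp
  interpret PAB: pair_prob_space ?PA ?PB ..
  have joint: "?PA \<Otimes>\<^sub>M ?PB = distr M (borel \<Otimes>\<^sub>M borel) (\<lambda>x. (A x, B x))"
    using iAB' by (simp add: indep_var_distribution_eq)
  define q where "q b = (\<Sum>j<N. (b \<bullet> w j) * (b \<bullet> w j))" for b :: "real^'d"
  have q_eq: "b \<bullet> (S *v b) = q b" for b using fac by (simp add: q_def)
  have q_meas[measurable]: "q \<in> borel_measurable borel" unfolding q_def by measurable
  have "(\<integral>\<^sup>+\<omega>. ennreal ((A \<omega> \<bullet> B \<omega>) ^ (2*k)) \<partial>M)
      = (\<integral>\<^sup>+p. ennreal ((fst p \<bullet> snd p) ^ (2*k)) \<partial>distr M (borel \<Otimes>\<^sub>M borel) (\<lambda>x. (A x, B x)))"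
    by (subst nn_integral_distr) auto
  also have "\<dots> = (\<integral>\<^sup>+p. ennreal ((fst p \<bullet> snd p) ^ (2*k)) \<partial>(?PA \<Otimes>\<^sub>M ?PB))"
    unfolding joint ..
  also have "\<dots> = (\<integral>\<^sup>+b. (\<integral>\<^sup>+a. ennreal ((a \<bullet> b) ^ (2*k)) \<partial>?PA) \<partial>?PB)"
    by (subst PAB.nn_integral_snd[symmetric]) auto
  also have "\<dots> = (\<integral>\<^sup>+b. ennreal (mom k * 2 ^ k) * ennreal (q b ^ k) \<partial>?PB)"
  proof (rule nn_integral_cong)
    fix b :: "real^'d"
    have "(\<integral>\<^sup>+a. ennreal ((a \<bullet> b) ^ (2*k)) \<partial>?PA) = (\<integral>\<^sup>+\<omega>. ennreal ((A \<omega> \<bullet> b) ^ (2*k)) \<partial>M)"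
      by (subst nn_integral_distr) auto
    also have "\<dots> = (\<integral>\<^sup>+\<omega>. ennreal ((b \<bullet> (X1 \<omega> - X3 \<omega>)) ^ (2*k)) \<partial>M)"
      by (simp add: A_def inner_commute)
    also have "\<dots> = ennreal (mom k * (2 * (b \<bullet> (S *v b))) ^ k)"
      by (rule gauss_diff_moment[OF i13 g1 g3]) (use psd in auto)
    also have "\<dots> = ennreal (mom k * 2 ^ k) * ennreal (q b ^ k)"
    proof -
      have qn: "0 \<le> q b" using psd q_eq[of b] by metis
      have "mom k * (2 * (b \<bullet> (S *v b))) ^ k = (mom k * 2 ^ k) * q b ^ k"
        using q_eq[of b] by (simp add: power_mult_distrib)
      then show ?thesis using mom_pos[of k] qn by (simp add: ennreal_mult mult.assoc)
    qed
    finally show "(\<integral>\<^sup>+a. ennreal ((a \<bullet> b) ^ (2*k)) \<partial>?PA) = ennreal (mom k * 2 ^ k) * ennreal (q b ^ k)" .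
  qed
  also have "\<dots> = ennreal (mom k * 2 ^ k) * (\<integral>\<^sup>+b. ennreal (q b ^ k) \<partial>?PB)"
    by (rule nn_integral_cmult) simp
  also have "(\<integral>\<^sup>+b. ennreal (q b ^ k) \<partial>?PB) = (\<integral>\<^sup>+\<omega>. ennreal (q (B \<omega>) ^ k) \<partial>M)"
    by (subst nn_integral_distr) auto
  finally show ?thesis by (simp add: A_def B_def q_eq)
qed

lemma Z_facts:
  fixes X1 X2 X3 X4 :: "'a \<Rightarrow> real^'d"
  assumes i13: "indep_var borel X1 borel X3" and i24: "indep_var borel X2 borel X4"
    and iAB: "indep_var borel (\<lambda>\<omega>. X1 \<omega> - X3 \<omega>) borel (\<lambda>\<omega>. X2 \<omega> - X4 \<omega>)"
    and g1: "centered_gaussian_vector M X1 S" and g2: "centered_gaussian_vector M X2 S"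
    and g3: "centered_gaussian_vector M X3 S" and g4: "centered_gaussian_vector M X4 S"
    and sym: "transpose S = S" and psd: "\<forall>v. 0 \<le> v \<bullet> (S *v v)"
  shows "(\<integral>\<^sup>+\<omega>. ennreal (((1/4) * ((X1 \<omega> - X3 \<omega>) \<bullet> (X2 \<omega> - X4 \<omega>))^2) ^ k) \<partial>M)
           \<le> ennreal (real k ^ (2*k) * trace (S ** S) ^ k)"
    and "(\<integral>\<^sup>+\<omega>. ennreal ((1/4) * ((X1 \<omega> - X3 \<omega>) \<bullet> (X2 \<omega> - X4 \<omega>))^2) \<partial>M)
           = ennreal (trace (S ** S))"
    and "0 \<le> trace (S ** S)"
proof -
  obtain N :: nat and w :: "nat \<Rightarrow> real^'d" where
    fac: "\<forall>u v. u \<bullet> (S *v v) = (\<Sum>j<N. (u \<bullet> w j) * (v \<bullet> w j))" and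
    tr: "trace (S ** S) = (\<Sum>j<N. w j \<bullet> (S *v w j))"
    using psd_factor_mat[OF sym psd] by blast
  define T where "T = trace (S ** S)"
  show T0: "0 \<le> trace (S ** S)" unfolding tr using psd by (simp add: sum_nonneg)
  have X1[measurable]: "X1 \<in> borel_measurable M" using g1 by (rule gauss_rv)
  have X2[measurable]: "X2 \<in> borel_measurable M" using g2 by (rule gauss_rv)
  have X3[measurable]: "X3 \<in> borel_measurable M" using g3 by (rule gauss_rv)
  have X4[measurable]: "X4 \<in> borel_measurable M" using g4 by (rule gauss_rv)
  have Zk: "((1/4) * ((X1 \<omega> - X3 \<omega>) \<bullet> (X2 \<omega> - X4 \<omega>))^2) ^ k
      = (1/4) ^ k * ((X1 \<omega> - X3 \<omega>) \<bullet> (X2 \<omega> - X4 \<omega>)) ^ (2*k)" for \<omega> k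
    unfolding power_mult_distrib power_mult by (rule refl)
  have main: "(\<integral>\<^sup>+\<omega>. ennreal (((1/4) * ((X1 \<omega> - X3 \<omega>) \<bullet> (X2 \<omega> - X4 \<omega>))^2) ^ k) \<partial>M)
      = ennreal ((1/4) ^ k * (mom k * 2 ^ k)) * (\<integral>\<^sup>+\<omega>. ennreal (((X2 \<omega> - X4 \<omega>) \<bullet> (S *v (X2 \<omega> - X4 \<omega>))) ^ k) \<partial>M)" for k
  proof -
    have "(\<integral>\<^sup>+\<omega>. ennreal (((1/4) * ((X1 \<omega> - X3 \<omega>) \<bullet> (X2 \<omega> - X4 \<omega>))^2) ^ k) \<partial>M)
        = (\<integral>\<^sup>+\<omega>. ennreal ((1/4) ^ k) * ennreal (((X1 \<omega> - X3 \<omega>) \<bullet> (X2 \<omega> - X4 \<omega>)) ^ (2*k)) \<partial>M)"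
      unfolding Zk by (simp add: ennreal_mult zero_le_even_power)
    also have "\<dots> = ennreal ((1/4) ^ k) * (\<integral>\<^sup>+\<omega>. ennreal (((X1 \<omega> - X3 \<omega>) \<bullet> (X2 \<omega> - X4 \<omega>)) ^ (2*k)) \<partial>M)"
      by (rule nn_integral_cmult) simp
    also have "\<dots> = ennreal ((1/4) ^ k) * (ennreal (mom k * 2 ^ k) * (\<integral>\<^sup>+\<omega>. ennreal (((X2 \<omega> - X4 \<omega>) \<bullet> (S *v (X2 \<omega> - X4 \<omega>))) ^ k) \<partial>M))"
      by (subst AB_moment[OF i13 iAB g1 g3 psd fac]) rule
    finally show ?thesis using mom_pos[of k] by (simp add: ennreal_mult mult.assoc)
  qed
  show "(\<integral>\<^sup>+\<omega>. ennreal (((1/4) * ((X1 \<omega> - X3 \<omega>) \<bullet> (X2 \<omega> - X4 \<omega>))^2) ^ k) \<partial>M)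
           \<le> ennreal (real k ^ (2*k) * trace (S ** S) ^ k)"
  proof -
    have "(\<integral>\<^sup>+\<omega>. ennreal (((1/4) * ((X1 \<omega> - X3 \<omega>) \<bullet> (X2 \<omega> - X4 \<omega>))^2) ^ k) \<partial>M)
        \<le> ennreal ((1/4) ^ k * (mom k * 2 ^ k)) * ennreal (mom k * (2 * T)^k)"
      unfolding main T_def tr by (rule mult_left_mono[OF quad_moment(1)[OF i24 g2 g4 psd fac]]) simp
    also have "\<dots> = ennreal (mom k * mom k * T ^ k)"
    proof -
      have f: "(2::real)^k * 2^k = 4^k" by (simp add: power_mult_distrib[symmetric])
      have "(1/4) ^ k * (mom k * 2 ^ k) * (mom k * (2 * T)^k) = mom k * mom k * T ^ k * ((2^k * 2^k) / 4^k)"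
        by (simp add: power_mult_distrib power_one_over)
      also have "\<dots> = mom k * mom k * T ^ k" unfolding f by simp
      finally show ?thesis using mom_pos[of k] T0 by (simp add: ennreal_mult[symmetric] T_def)
    qed
    also have "\<dots> \<le> ennreal (real k ^ (2*k) * T ^ k)"
    proof (rule ennreal_leI, rule mult_right_mono)
      have "mom k * mom k \<le> real k ^ k * real k ^ k"
        using mom_le[of k] mom_pos[of k] by (intro mult_mono) auto
      then show "mom k * mom k \<le> real k ^ (2 * k)" by (simp add: mult_2 power_add)
    qed (use T0 in \<open>simp add: T_def\<close>)
    finally show ?thesis by (simp add: T_def)
  qed
  show "(\<integral>\<^sup>+\<omega>. ennreal ((1/4) * ((X1 \<omega> - X3 \<omega>) \<bullet> (X2 \<omega> - X4 \<omega>))^2) \<partial>M) = ennreal (trace (S ** S))"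
  proof -
    have "(\<integral>\<^sup>+\<omega>. ennreal ((1/4) * ((X1 \<omega> - X3 \<omega>) \<bullet> (X2 \<omega> - X4 \<omega>))^2) \<partial>M)
        = ennreal ((1/4) ^ 1 * (mom 1 * 2 ^ 1)) * ennreal (2 * (\<Sum>j<N. w j \<bullet> (S *v w j)))"
      using main[of 1] quad_moment(2)[OF i24 g2 g4 psd fac] by simp
    also have "\<dots> = ennreal ((1/4) ^ 1 * (mom 1 * 2 ^ 1) * (2 * (\<Sum>j<N. w j \<bullet> (S *v w j))))"
      by (rule ennreal_mult'[symmetric]) (use psd in \<open>simp add: sum_nonneg\<close>)
    finally show ?thesis unfolding tr by simp
  qed
qed

end

context prob_space begin

lemma moment_rec:
  fixes Y :: "nat \<Rightarrow> 'a \<Rightarrow> real" and f a :: "nat \<Rightarrow> real"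
  assumes indep: "indep_vars (\<lambda>_. borel) Y {1..m}"
    and int: "\<And>i n. i \<in> {1..m} \<Longrightarrow> integrable M (\<lambda>\<omega>. Y i \<omega> ^ n)"
    and mean0: "\<And>i. i \<in> {1..m} \<Longrightarrow> expectation (Y i) = 0"
    and momb: "\<And>i n. i \<in> {1..m} \<Longrightarrow> 2 \<le> n \<Longrightarrow> expectation (\<lambda>\<omega>. \<bar>Y i \<omega>\<bar> ^ n) \<le> a n"
    and f0: "1 \<le> f 0" and fnn: "\<And>n. 0 \<le> f n" and af: "\<And>n. 2 \<le> n \<Longrightarrow> a n \<le> f n"
    and rec: "\<And>n. 2 \<le> n \<Longrightarrow> (\<Sum>k=2..n. real (n choose k) * f (n-k) * a k) \<le> real n / 2 * f n"
    and l: "1 \<le> l" "l \<le> m"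
  shows "integrable M (\<lambda>\<omega>. (\<Sum>i=1..l. Y i \<omega>) ^ n) \<and>
         \<bar>expectation (\<lambda>\<omega>. (\<Sum>i=1..l. Y i \<omega>) ^ n)\<bar> \<le> f n * sqrt (real l) ^ n"
  using l
proof (induction l arbitrary: n rule: dec_induct)
  case base
  have Y1: "1 \<in> {1..m}" using l by simp
  have "\<bar>expectation (\<lambda>\<omega>. Y 1 \<omega> ^ n)\<bar> \<le> f n"
  proof (cases "n \<le> 1")
    case True
    then consider "n = 0" | "n = 1" by linarith
    then show ?thesis
    proof cases
      case 1 then show ?thesis using f0 by (simp add: prob_space)
    next
      case 2 then show ?thesis using mean0[OF Y1] fnn by simp
    qed
  next
    case False
    have "\<bar>expectation (\<lambda>\<omega>. Y 1 \<omega> ^ n)\<bar> \<le> expectation (\<lambda>\<omega>. \<bar>Y 1 \<omega> ^ n\<bar>)"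
      by (rule integral_abs_bound)
    also have "\<dots> = expectation (\<lambda>\<omega>. \<bar>Y 1 \<omega>\<bar> ^ n)" by (simp add: power_abs)
    also have "\<dots> \<le> a n" using momb[OF Y1] False by simp
    also have "\<dots> \<le> f n" using af False by simp
    finally show ?thesis .
  qed
  then show ?case using int[OF Y1] by simp
next
  case (step l)
  have lm: "l < m" "1 \<le> l" using step by auto
  have Yl: "Suc l \<in> {1..m}" using lm by simp
  define S where "S \<omega> = (\<Sum>i=1..l. Y i \<omega>)" for \<omega>
  define Yn where "Yn = Y (Suc l)"
  have sumS: "(\<Sum>i=1..Suc l. Y i \<omega>) = Yn \<omega> + S \<omega>" for \<omega>
    using lm by (simp add: S_def Yn_def)
  have IH: "integrable M (\<lambda>\<omega>. S \<omega> ^ j)" "\<bar>expectation (\<lambda>\<omega>. S \<omega> ^ j)\<bar> \<le> f j * sqrt (real l) ^ j" for j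
    using step.IH[of j] lm unfolding S_def by auto
  have ind0: "indep_var (PiM {Suc l} (\<lambda>_. borel)) (\<lambda>\<omega>. restrict (\<lambda>i. Y i \<omega>) {Suc l})
                        (PiM {1..l} (\<lambda>_. borel)) (\<lambda>\<omega>. restrict (\<lambda>i. Y i \<omega>) {1..l})"
    by (rule indep_var_restrict[OF indep]) (use lm in auto)
  have ind: "indep_var borel (\<lambda>\<omega>. Yn \<omega> ^ k) borel (\<lambda>\<omega>. S \<omega> ^ j)" for k j
  proof -
    have m1: "(\<lambda>x::nat\<Rightarrow>real. x (Suc l) ^ k) \<in> borel_measurable (PiM {Suc l} (\<lambda>_. borel))"
      by measurable
    have m2: "(\<lambda>x::nat\<Rightarrow>real. (\<Sum>i\<in>{1..l}. x i) ^ j) \<in> borel_measurable (PiM {1..l} (\<lambda>_. borel))" by measurable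
    have "indep_var borel ((\<lambda>x. x (Suc l) ^ k) \<circ> (\<lambda>\<omega>. restrict (\<lambda>i. Y i \<omega>) {Suc l}))
                    borel ((\<lambda>x. (\<Sum>i\<in>{1..l}. x i) ^ j) \<circ> (\<lambda>\<omega>. restrict (\<lambda>i. Y i \<omega>) {1..l}))"
      by (rule indep_var_compose[OF ind0 m1 m2])
    moreover have "((\<lambda>x. x (Suc l) ^ k) \<circ> (\<lambda>\<omega>. restrict (\<lambda>i. Y i \<omega>) {Suc l})) = (\<lambda>\<omega>. Yn \<omega> ^ k)"
      by (simp add: fun_eq_iff Yn_def)
    moreover have "((\<lambda>x. (\<Sum>i\<in>{1..l}. x i) ^ j) \<circ> (\<lambda>\<omega>. restrict (\<lambda>i. Y i \<omega>) {1..l})) = (\<lambda>\<omega>. S \<omega> ^ j)"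
      by (simp add: fun_eq_iff S_def)
    ultimately show ?thesis by simp
  qed
  have intY: "integrable M (\<lambda>\<omega>. Yn \<omega> ^ k)" for k using int[OF Yl] by (simp add: Yn_def)
  have intP: "integrable M (\<lambda>\<omega>. Yn \<omega> ^ k * S \<omega> ^ j)" for k j
    by (rule indep_var_integrable[OF ind intY IH(1)])
  have EP: "expectation (\<lambda>\<omega>. Yn \<omega> ^ k * S \<omega> ^ j) = expectation (\<lambda>\<omega>. Yn \<omega> ^ k) * expectation (\<lambda>\<omega>. S \<omega> ^ j)" for k j
    by (rule indep_var_lebesgue_integral[OF ind intY IH(1)])
  have expand: "(Yn \<omega> + S \<omega>) ^ n = (\<Sum>k\<le>n. real (n choose k) * (Yn \<omega> ^ k * S \<omega> ^ (n - k)))" for \<omega>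
    unfolding binomial_ring by (simp add: mult.assoc)
  have intS': "integrable M (\<lambda>\<omega>. (Yn \<omega> + S \<omega>) ^ n)"
    unfolding expand using intP by auto
  define y where "y k = expectation (\<lambda>\<omega>. Yn \<omega> ^ k)" for k
  define e where "e j = expectation (\<lambda>\<omega>. S \<omega> ^ j)" for j
  define g where "g k = real (n choose k) * (y k * e (n - k))" for k
  have y0: "y 0 = 1" by (simp add: y_def prob_space)
  have y1: "y 1 = 0" using mean0[OF Yl] by (simp add: y_def Yn_def)
  have yb: "\<bar>y k\<bar> \<le> a k" if "2 \<le> k" for k
  proof -
    have "\<bar>y k\<bar> \<le> expectation (\<lambda>\<omega>. \<bar>Yn \<omega> ^ k\<bar>)" unfolding y_def by (rule integral_abs_bound)
    also have "\<dots> = expectation (\<lambda>\<omega>. \<bar>Yn \<omega>\<bar> ^ k)" by (simp add: power_abs)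
    also have "\<dots> \<le> a k" using momb[OF Yl that] by (simp add: Yn_def)
    finally show ?thesis .
  qed
  have E: "expectation (\<lambda>\<omega>. (Yn \<omega> + S \<omega>) ^ n) = (\<Sum>k\<le>n. g k)"
    unfolding expand g_def y_def e_def
    using intP by (simp add: EP)
  have E2: "(\<Sum>k\<le>n. g k) = e n + (\<Sum>k=2..n. g k)"
  proof -
    have "{..n} = insert 0 {1..n}" by auto
    then have "(\<Sum>k\<le>n. g k) = g 0 + (\<Sum>k=1..n. g k)" by simp
    also have "(\<Sum>k=1..n. g k) = (\<Sum>k=2..n. g k)"
    proof (rule sum.mono_neutral_right)
      show "\<forall>i\<in>{1..n} - {2..n}. g i = 0"
      proof
        fix i assume "i \<in> {1..n} - {2..n}"
        then have "i = 1" by auto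
        then show "g i = 0" using y1 by (simp add: g_def)
      qed
    qed auto
    finally show ?thesis by (simp add: g_def y0)
  qed
  define s where "s = sqrt (real l)"
  define t where "t = sqrt (real (Suc l))"
  have s1: "1 \<le> s" using lm by (simp add: s_def)
  have st: "t = sqrt (s^2 + 1)" using lm by (simp add: s_def t_def)
  have s_le_t: "s \<le> t" by (simp add: s_def t_def)
  have en: "\<bar>e j\<bar> \<le> f j * s ^ j" for j using IH(2)[of j] by (simp add: e_def s_def)
  have bound: "\<bar>expectation (\<lambda>\<omega>. (Yn \<omega> + S \<omega>) ^ n)\<bar> \<le> f n * t ^ n"
  proof (cases "n < 2")
    case True
    then have "{2..n} = {}" by auto
    then have "\<bar>expectation (\<lambda>\<omega>. (Yn \<omega> + S \<omega>) ^ n)\<bar> = \<bar>e n\<bar>" using E E2 by simp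
    also have "\<dots> \<le> f n * s ^ n" by (rule en)
    also have "\<dots> \<le> f n * t ^ n"
      using s1 s_le_t fnn[of n] by (intro mult_left_mono power_mono) auto
    finally show ?thesis .
  next
    case False
    then obtain j where j: "n = j + 2" by (metis add.commute le_Suc_ex not_less)
    have "\<bar>expectation (\<lambda>\<omega>. (Yn \<omega> + S \<omega>) ^ n)\<bar> \<le> \<bar>e n\<bar> + (\<Sum>k=2..n. \<bar>g k\<bar>)"
      using E E2 by (simp add: order_trans[OF abs_triangle_ineq sum_abs[THEN add_left_mono]])
    also have "(\<Sum>k=2..n. \<bar>g k\<bar>) \<le> (\<Sum>k=2..n. real (n choose k) * f (n - k) * a k * s ^ j)"
    proof (rule sum_mono)
      fix k assume k: "k \<in> {2..n}"
      have "\<bar>g k\<bar> = real (n choose k) * (\<bar>y k\<bar> * \<bar>e (n - k)\<bar>)" by (simp add: g_def abs_mult)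
      also have "\<dots> \<le> real (n choose k) * (a k * (f (n - k) * s ^ (n - k)))"
        using yb[of k] en[of "n-k"] k by (intro mult_left_mono mult_mono) auto
      also have "\<dots> \<le> real (n choose k) * (a k * (f (n - k) * s ^ j))"
      proof -
        have "s ^ (n - k) \<le> s ^ j" using k j s1 by (intro power_increasing) auto
        moreover have "0 \<le> a k" using yb[of k] k by (meson abs_ge_zero order_trans atLeastAtMost_iff)
        ultimately show ?thesis using fnn[of "n-k"] by (intro mult_left_mono) auto
      qed
      finally show "\<bar>g k\<bar> \<le> real (n choose k) * f (n - k) * a k * s ^ j" by (simp add: algebra_simps)
    qed
    also have "(\<Sum>k=2..n. real (n choose k) * f (n - k) * a k * s ^ j) = (\<Sum>k=2..n. real (n choose k) * f (n - k) * a k) * s ^ j"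
      by (simp add: sum_distrib_right)
    also have "\<dots> \<le> real n / 2 * f n * s ^ j"
      using rec[of n] False s1 by (intro mult_right_mono) auto
    finally have "\<bar>expectation (\<lambda>\<omega>. (Yn \<omega> + S \<omega>) ^ n)\<bar> \<le> f n * (s ^ n + real n / 2 * s ^ j)"
      using en[of n] by (simp add: algebra_simps)
    also have "\<dots> \<le> f n * t ^ n"
      using sqrt_bern[of s t j] s1 st j fnn[of n] by (intro mult_left_mono) auto
    finally show ?thesis .
  qed
  have fe: "(\<lambda>\<omega>. (\<Sum>i=1..Suc l. Y i \<omega>) ^ n) = (\<lambda>\<omega>. (Yn \<omega> + S \<omega>) ^ n)"
    by (rule ext) (simp only: sumS)
  show ?case unfolding fe using intS' bound by (simp add: t_def)
qed

end

context prob_space begin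

lemma indep_pair:
  fixes F :: "'i \<Rightarrow> 'a \<Rightarrow> 'b::topological_space"
  assumes ind: "indep_vars (\<lambda>_. borel) F I" and AB: "A \<inter> B = {}" "A \<subseteq> I" "B \<subseteq> I"
    and g: "g \<in> measurable (PiM A (\<lambda>_. borel)) (borel :: 'c::topological_space measure)"
    and h: "h \<in> measurable (PiM B (\<lambda>_. borel)) (borel :: 'c::topological_space measure)"
  shows "indep_var borel (\<lambda>\<omega>. g (restrict (\<lambda>i. F i \<omega>) A)) borel (\<lambda>\<omega>. h (restrict (\<lambda>i. F i \<omega>) B))"
  using indep_var_compose[OF indep_var_restrict[OF ind AB] g h] by (simp add: comp_def)

lemma Y_facts:
  fixes X1 X2 X3 X4 :: "'a \<Rightarrow> real^'d"
  assumes i13: "indep_var borel X1 borel X3" and i24: "indep_var borel X2 borel X4"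
    and iAB: "indep_var borel (\<lambda>\<omega>. X1 \<omega> - X3 \<omega>) borel (\<lambda>\<omega>. X2 \<omega> - X4 \<omega>)"
    and g1: "centered_gaussian_vector M X1 S" and g2: "centered_gaussian_vector M X2 S"
    and g3: "centered_gaussian_vector M X3 S" and g4: "centered_gaussian_vector M X4 S"
    and sym: "transpose S = S" and psd: "\<forall>v. 0 \<le> v \<bullet> (S *v v)"
  defines "Y \<equiv> \<lambda>\<omega>. (1/4) * ((X1 \<omega> - X3 \<omega>) \<bullet> (X2 \<omega> - X4 \<omega>))^2 - trace (S ** S)"
  shows "integrable M (\<lambda>\<omega>. Y \<omega> ^ n)" and "expectation Y = 0"
    and "1 \<le> n \<Longrightarrow> expectation (\<lambda>\<omega>. \<bar>Y \<omega>\<bar> ^ n) \<le> 2 * real n ^ (2*n) * trace (S ** S) ^ n"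
proof -
  define T where "T = trace (S ** S)"
  define Z where "Z \<omega> = (1/4) * ((X1 \<omega> - X3 \<omega>) \<bullet> (X2 \<omega> - X4 \<omega>))^2" for \<omega>
  have X1[measurable]: "X1 \<in> borel_measurable M" using g1 by (rule gauss_rv)
  have X2[measurable]: "X2 \<in> borel_measurable M" using g2 by (rule gauss_rv)
  have X3[measurable]: "X3 \<in> borel_measurable M" using g3 by (rule gauss_rv)
  have X4[measurable]: "X4 \<in> borel_measurable M" using g4 by (rule gauss_rv)
  have Zm[measurable]: "Z \<in> borel_measurable M" unfolding Z_def by measurable
  have Z0: "0 \<le> Z \<omega>" for \<omega> by (simp add: Z_def)
  have T0: "0 \<le> T" unfolding T_def by (rule Z_facts(3)[OF i13 i24 iAB g1 g2 g3 g4 sym psd])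
  have nnk: "(\<integral>\<^sup>+\<omega>. ennreal (Z \<omega> ^ k) \<partial>M) \<le> ennreal (real k ^ (2*k) * T ^ k)" for k
    unfolding Z_def T_def by (rule Z_facts(1)[OF i13 i24 iAB g1 g2 g3 g4 sym psd])
  have nn1: "(\<integral>\<^sup>+\<omega>. ennreal (Z \<omega>) \<partial>M) = ennreal T"
    unfolding Z_def T_def by (rule Z_facts(2)[OF i13 i24 iAB g1 g2 g3 g4 sym psd])
  have intZ: "integrable M (\<lambda>\<omega>. Z \<omega> ^ k)" for k
  proof (rule integrableI_bounded)
    show "(\<lambda>\<omega>. Z \<omega> ^ k) \<in> borel_measurable M" by measurable
    have "(\<integral>\<^sup>+\<omega>. ennreal (norm (Z \<omega> ^ k)) \<partial>M) = (\<integral>\<^sup>+\<omega>. ennreal (Z \<omega> ^ k) \<partial>M)"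
      using Z0 by simp
    also have "\<dots> < \<infinity>" using nnk[of k] by (simp add: le_less_trans)
    finally show "(\<integral>\<^sup>+\<omega>. ennreal (norm (Z \<omega> ^ k)) \<partial>M) < \<infinity>" .
  qed
  have EZk: "expectation (\<lambda>\<omega>. Z \<omega> ^ k) \<le> real k ^ (2*k) * T ^ k" for k
  proof -
    have "ennreal (expectation (\<lambda>\<omega>. Z \<omega> ^ k)) = (\<integral>\<^sup>+\<omega>. ennreal (Z \<omega> ^ k) \<partial>M)"
      by (rule nn_integral_eq_integral[OF intZ, symmetric]) (simp add: Z0)
    then have "ennreal (expectation (\<lambda>\<omega>. Z \<omega> ^ k)) \<le> ennreal (real k ^ (2*k) * T ^ k)" using nnk[of k] by simp
    then show ?thesis using T0 by (simp add: ennreal_le_iff)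
  qed
  have EZ: "expectation Z = T"
  proof -
    have "ennreal (expectation (\<lambda>\<omega>. Z \<omega> ^ 1)) = (\<integral>\<^sup>+\<omega>. ennreal (Z \<omega> ^ 1) \<partial>M)"
      by (rule nn_integral_eq_integral[OF intZ, symmetric]) (simp add: Z0)
    then have "ennreal (expectation Z) = ennreal T" using nn1 by simp
    moreover have "0 \<le> expectation Z" using Z0 by simp
    ultimately show ?thesis using T0 by simp
  qed
  have Yeq: "Y = (\<lambda>\<omega>. Z \<omega> - T)" by (simp add: Y_def Z_def T_def)
  have absb: "\<bar>(Z \<omega> - T) ^ n\<bar> \<le> Z \<omega> ^ n + T ^ n" for \<omega>
  proof -
    have "\<bar>Z \<omega> - T\<bar> \<le> max (Z \<omega>) T" using Z0[of \<omega>] T0 by auto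
    then have "\<bar>Z \<omega> - T\<bar> ^ n \<le> max (Z \<omega>) T ^ n" by (rule power_mono) simp
    also have "\<dots> \<le> Z \<omega> ^ n + T ^ n" using Z0[of \<omega>] T0 by (cases "Z \<omega> \<le> T") (auto simp: max_def)
    finally show ?thesis by (simp add: power_abs)
  qed
  have intB: "integrable M (\<lambda>\<omega>. Z \<omega> ^ n + T ^ n)" using intZ by simp
  show intY: "integrable M (\<lambda>\<omega>. Y \<omega> ^ n)"
    unfolding Yeq
    by (rule Bochner_Integration.integrable_bound[OF intB]) (use absb Z0 T0 in \<open>auto simp: add_nonneg_nonneg\<close>)
  show "expectation Y = 0" unfolding Yeq using intZ[of 1] EZ by (simp add: prob_space)
  assume n: "1 \<le> n"
  have "expectation (\<lambda>\<omega>. \<bar>Y \<omega>\<bar> ^ n) \<le> expectation (\<lambda>\<omega>. Z \<omega> ^ n + T ^ n)"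
  proof (rule integral_mono)
    show "integrable M (\<lambda>\<omega>. \<bar>Y \<omega>\<bar> ^ n)"
      unfolding Yeq
      by (rule Bochner_Integration.integrable_bound[OF intB]) (use absb Z0 T0 in \<open>auto simp: add_nonneg_nonneg power_abs\<close>)
  qed (use intB absb in \<open>auto simp: Yeq power_abs\<close>)
  also have "\<dots> = expectation (\<lambda>\<omega>. Z \<omega> ^ n) + T ^ n" using intZ[of n] by (simp add: prob_space)
  also have "\<dots> \<le> real n ^ (2*n) * T ^ n + T ^ n" using EZk[of n] by simp
  also have "\<dots> \<le> 2 * real n ^ (2*n) * T ^ n"
  proof -
    have "1 \<le> real n ^ (2*n)" using n by simp
    then have "T ^ n \<le> real n ^ (2*n) * T ^ n" using T0 by (simp add: mult_le_cancel_right1)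
    then show ?thesis by (simp add: mult.commute)
  qed
  finally show "expectation (\<lambda>\<omega>. \<bar>Y \<omega>\<bar> ^ n) \<le> 2 * real n ^ (2*n) * trace (S ** S) ^ n" by (simp add: T_def)
qed

end

theorem lemma4:
  fixes M :: "'a measure" and X :: "nat \<Rightarrow> nat \<Rightarrow> 'a \<Rightarrow> real^'d"
    and S :: "real^'d^'d" and m q :: nat
  assumes "prob_space M"
    and "m \<ge> 1"
    and "transpose S = S"
    and "\<forall>v. v \<bullet> (S *v v) \<ge> 0"
    and "prob_space.indep_vars M (\<lambda>_. borel) (\<lambda>(i, j). X i j)
           ({1..m} \<times> {1..4})"
    and "\<forall>i\<in>{1..m}. \<forall>j\<in>{1..4::nat}. centered_gaussian_vector M (X i j) S"
  shows "prob_space.expectation M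
           (\<lambda>\<omega>. ((1 / real m) * (\<Sum>i=1..m.
               (1/4) * ((X i 1 \<omega> - X i 3 \<omega>) \<bullet> (X i 2 \<omega> - X i 4 \<omega>))^2)
             - trace (S ** S)) ^ (2 * q))
         \<le> (4 * sqrt 2 * ((1 + sqrt 5) / 2) * real q ^ 2 * trace (S ** S) / sqrt (real m))
             ^ (2 * q)"
proof -
  interpret prob_space M by (rule assms(1))
  note ind = assms(5)
  note gs = assms(6)
  define T where "T = trace (S ** S)"
  define F where "F = (\<lambda>(i, j). X i j)"
  have indF: "indep_vars (\<lambda>_. borel) F ({1..m} \<times> {1..4})" using ind by (simp add: F_def)
  define Y where "Y i \<omega> = (1/4) * ((X i 1 \<omega> - X i 3 \<omega>) \<bullet> (X i 2 \<omega> - X i 4 \<omega>))^2 - T" for i \<omega>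
  have psd: "\<forall>v. 0 \<le> v \<bullet> (S *v v)" using assms(4) by simp
  have facts: "integrable M (\<lambda>\<omega>. Y i \<omega> ^ n) \<and> expectation (Y i) = 0 \<and>
      (1 \<le> n \<longrightarrow> expectation (\<lambda>\<omega>. \<bar>Y i \<omega>\<bar> ^ n) \<le> 2 * real n ^ (2*n) * T ^ n)"
    if i: "i \<in> {1..m}" for i n
  proof -
    have g: "centered_gaussian_vector M (X i j) S" if "j \<in> {1..4}" for j using gs i that by blast
    have sub: "{(i,j)} \<subseteq> {1..m} \<times> {1..4}" if "j \<in> {1..4}" for j using i that by auto
    have i13: "indep_var borel (X i 1) borel (X i 3)"
    proof -
      have m1: "(\<lambda>x::nat\<times>nat\<Rightarrow>real^'d. x (i,1)) \<in> borel_measurable (PiM {(i,1)} (\<lambda>_. borel))"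
        by measurable
      have m2: "(\<lambda>x::nat\<times>nat\<Rightarrow>real^'d. x (i,3)) \<in> borel_measurable (PiM {(i,3)} (\<lambda>_. borel))"
        by measurable
      have "indep_var borel (\<lambda>\<omega>. (\<lambda>x::nat\<times>nat\<Rightarrow>real^'d. x (i,1)) (restrict (\<lambda>p. F p \<omega>) {(i,1)}))
                      borel (\<lambda>\<omega>. (\<lambda>x::nat\<times>nat\<Rightarrow>real^'d. x (i,3)) (restrict (\<lambda>p. F p \<omega>) {(i,3)}))"
        by (rule indep_pair[OF indF _ _ _ m1 m2]) (use i in auto)
      then show ?thesis by (simp add: F_def)
    qed
    have i24: "indep_var borel (X i 2) borel (X i 4)"
    proof -
      have m1: "(\<lambda>x::nat\<times>nat\<Rightarrow>real^'d. x (i,2)) \<in> borel_measurable (PiM {(i,2)} (\<lambda>_. borel))"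
        by measurable
      have m2: "(\<lambda>x::nat\<times>nat\<Rightarrow>real^'d. x (i,4)) \<in> borel_measurable (PiM {(i,4)} (\<lambda>_. borel))"
        by measurable
      have "indep_var borel (\<lambda>\<omega>. (\<lambda>x::nat\<times>nat\<Rightarrow>real^'d. x (i,2)) (restrict (\<lambda>p. F p \<omega>) {(i,2)}))
                      borel (\<lambda>\<omega>. (\<lambda>x::nat\<times>nat\<Rightarrow>real^'d. x (i,4)) (restrict (\<lambda>p. F p \<omega>) {(i,4)}))"
        by (rule indep_pair[OF indF _ _ _ m1 m2]) (use i in auto)
      then show ?thesis by (simp add: F_def)
    qed
    have iAB: "indep_var borel (\<lambda>\<omega>. X i 1 \<omega> - X i 3 \<omega>) borel (\<lambda>\<omega>. X i 2 \<omega> - X i 4 \<omega>)"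
    proof -
      have m1: "(\<lambda>x::nat\<times>nat\<Rightarrow>real^'d. x (i,1) - x (i,3)) \<in> borel_measurable (PiM {(i,1),(i,3)} (\<lambda>_. borel))"
        by measurable
      have m2: "(\<lambda>x::nat\<times>nat\<Rightarrow>real^'d. x (i,2) - x (i,4)) \<in> borel_measurable (PiM {(i,2),(i,4)} (\<lambda>_. borel))"
        by measurable
      have "indep_var borel (\<lambda>\<omega>. (\<lambda>x::nat\<times>nat\<Rightarrow>real^'d. x (i,1) - x (i,3)) (restrict (\<lambda>p. F p \<omega>) {(i,1),(i,3)}))
                      borel (\<lambda>\<omega>. (\<lambda>x::nat\<times>nat\<Rightarrow>real^'d. x (i,2) - x (i,4)) (restrict (\<lambda>p. F p \<omega>) {(i,2),(i,4)}))"
        by (rule indep_pair[OF indF _ _ _ m1 m2]) (use i in auto)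
      then show ?thesis by (simp add: F_def)
    qed
    note YF = Y_facts[OF i13 i24 iAB g g g g assms(3) psd]
    show ?thesis using YF(1)[of n] YF(2) YF(3)[of n] unfolding Y_def[abs_def] T_def by simp
  qed
  have indY: "indep_vars (\<lambda>_. borel) Y {1..m}"
  proof -
    have r: "indep_vars (\<lambda>i. PiM ({i} \<times> {1..4}) (\<lambda>_. borel)) (\<lambda>i \<omega>. restrict (\<lambda>p. F p \<omega>) ({i} \<times> {1..4})) {1..m}"
      by (rule indep_vars_restrict[OF indF]) (auto simp: disjoint_family_on_def)
    define G where "G i x = (1/4) * ((x (i,1) - x (i,3)) \<bullet> (x (i,2) - x (i,4)))^2 - T"
      for i and x :: "nat\<times>nat \<Rightarrow> real^'d"
    have Gm: "G i \<in> borel_measurable (PiM ({i} \<times> {1..4}) (\<lambda>_. borel))" for i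
      unfolding G_def by measurable
    have "indep_vars (\<lambda>_. borel) (\<lambda>i \<omega>. G i (restrict (\<lambda>p. F p \<omega>) ({i} \<times> {1..4}))) {1..m}"
      by (rule indep_vars_compose2[OF r Gm])
    moreover have "(\<lambda>\<omega>. G i (restrict (\<lambda>p. F p \<omega>) ({i} \<times> {1..4}))) = Y i" for i
      by (simp add: fun_eq_iff G_def F_def Y_def)
    ultimately show ?thesis by simp
  qed
  define f where "f n = (2 * real n ^ 2 * T) ^ n" for n
  define a where "a n = 2 * real n ^ (2*n) * T ^ n" for n
  have T0: "0 \<le> T"
  proof -
    obtain N :: nat and w :: "nat \<Rightarrow> real^'d" where
      tr: "trace (S ** S) = (\<Sum>j<N. w j \<bullet> (S *v w j))"
      using psd_factor_mat[OF assms(3) psd] by blast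
    show ?thesis unfolding T_def tr using psd by (simp add: sum_nonneg)
  qed
  have rec: "integrable M (\<lambda>\<omega>. (\<Sum>i=1..m. Y i \<omega>) ^ n) \<and>
         \<bar>expectation (\<lambda>\<omega>. (\<Sum>i=1..m. Y i \<omega>) ^ n)\<bar> \<le> f n * sqrt (real m) ^ n" for n
  proof (rule moment_rec[OF indY])
    show "\<And>i n. i \<in> {1..m} \<Longrightarrow> integrable M (\<lambda>\<omega>. Y i \<omega> ^ n)" using facts by blast
    show "\<And>i. i \<in> {1..m} \<Longrightarrow> expectation (Y i) = 0" using facts by blast
    show "\<And>i n. i \<in> {1..m} \<Longrightarrow> 2 \<le> n \<Longrightarrow> expectation (\<lambda>\<omega>. \<bar>Y i \<omega>\<bar> ^ n) \<le> a n"
      using facts unfolding a_def by (meson le_trans one_le_numeral)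
    show "1 \<le> f 0" by (simp add: f_def)
    show "\<And>n. 0 \<le> f n" using T0 by (simp add: f_def)
    show "\<And>n. 2 \<le> n \<Longrightarrow> a n \<le> f n"
    proof -
      fix n :: nat assume n: "2 \<le> n"
      have "f n = 2 ^ n * (real n ^ (2*n) * T ^ n)"
        by (simp add: f_def power_mult_distrib power_mult)
      moreover have "(2::real) \<le> 2 ^ n" using n by (metis power_one_right power_increasing one_le_numeral le_trans one_le_numeral Suc_1 Suc_leD)
      moreover have "0 \<le> real n ^ (2*n) * T ^ n" using T0 by simp
      ultimately show "a n \<le> f n" unfolding a_def by (simp add: mult_right_mono mult.assoc)
    qed
    show "\<And>n. 2 \<le> n \<Longrightarrow> (\<Sum>k=2..n. real (n choose k) * f (n-k) * a k) \<le> real n / 2 * f n"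
      unfolding f_def a_def by (rule num_rec[OF T0])
  qed (use assms(2) in auto)
  have key: "\<bar>expectation (\<lambda>\<omega>. (\<Sum>i=1..m. Y i \<omega>) ^ (2*q))\<bar> \<le> (8 * real q ^ 2 * T) ^ (2*q) * real m ^ q"
  proof -
    have "sqrt (real m) ^ (2*q) = real m ^ q" by (simp add: power_mult)
    moreover have "f (2*q) = (8 * real q ^ 2 * T) ^ (2*q)" by (simp add: f_def power_mult_distrib)
    ultimately show ?thesis using rec[of "2*q"] by simp
  qed
  have m0: "0 < real m" using assms(2) by simp
  have expr: "(1 / real m) * (\<Sum>i=1..m. (1/4) * ((X i 1 \<omega> - X i 3 \<omega>) \<bullet> (X i 2 \<omega> - X i 4 \<omega>))^2) - trace (S ** S)
      = (1 / real m) * (\<Sum>i=1..m. Y i \<omega>)" for \<omega>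
  proof -
    have "(\<Sum>i=1..m. Y i \<omega>) = (\<Sum>i=1..m. (1/4) * ((X i 1 \<omega> - X i 3 \<omega>) \<bullet> (X i 2 \<omega> - X i 4 \<omega>))^2) - real m * T"
      unfolding Y_def by (simp add: sum_subtractf)
    then show ?thesis using m0 by (simp add: right_diff_distrib T_def)
  qed
  have "prob_space.expectation M
           (\<lambda>\<omega>. ((1 / real m) * (\<Sum>i=1..m.
               (1/4) * ((X i 1 \<omega> - X i 3 \<omega>) \<bullet> (X i 2 \<omega> - X i 4 \<omega>))^2)
             - trace (S ** S)) ^ (2 * q))
       = (1 / real m) ^ (2*q) * expectation (\<lambda>\<omega>. (\<Sum>i=1..m. Y i \<omega>) ^ (2*q))"
    unfolding expr power_mult_distrib by simp
  also have "\<dots> \<le> (1 / real m) ^ (2*q) * ((8 * real q ^ 2 * T) ^ (2*q) * real m ^ q)"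
    using key by (intro mult_left_mono) auto
  also have "\<dots> = (8 * real q ^ 2 * T / sqrt (real m)) ^ (2*q)"
  proof -
    have "sqrt (real m) ^ (2*q) = real m ^ q" by (simp add: power_mult)
    moreover have "real m ^ (2*q) = real m ^ q * real m ^ q" by (simp add: mult_2 power_add)
    ultimately show ?thesis using m0 by (simp add: power_divide power_one_over field_simps)
  qed
  also have "\<dots> \<le> (4 * sqrt 2 * ((1 + sqrt 5) / 2) * real q ^ 2 * T / sqrt (real m)) ^ (2*q)"
  proof (rule power_mono)
    have s2: "1.4 \<le> sqrt (2::real)" by (rule real_le_rsqrt) (simp add: power2_eq_square)
    have s5: "2.2 \<le> sqrt (5::real)" by (rule real_le_rsqrt) (simp add: power2_eq_square)
    have "8 \<le> 4 * sqrt 2 * ((1 + sqrt 5) / 2)"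
    proof -
      have "4 * 1.4 * ((1 + 2.2) / 2) \<le> 4 * sqrt 2 * ((1 + sqrt 5) / 2)"
        using s2 s5 by (intro mult_mono) auto
      then show ?thesis by simp
    qed
    then have "8 * (real q ^ 2 * T) \<le> 4 * sqrt 2 * ((1 + sqrt 5) / 2) * (real q ^ 2 * T)"
      using T0 by (intro mult_right_mono) auto
    then show "8 * real q ^ 2 * T / sqrt (real m) \<le> 4 * sqrt 2 * ((1 + sqrt 5) / 2) * real q ^ 2 * T / sqrt (real m)"
      by (intro divide_right_mono) (auto simp: mult.assoc)
    show "0 \<le> 8 * real q ^ 2 * T / sqrt (real m)" using T0 by simp
  qed
  finally show ?thesis by (simp add: T_def)
qed

end
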